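(* Let $N$ be a positive integer, $h:=1/N$, $t_j:=jh$ for $j\in\mathbb Z$, and $e_n(t):=\exp(2\pi i n t)$. Let $\mathbb T_h:=\mathrm{span}\{e_n : n\in\mathbb Z,\ -N/2\le n<N/2\}$. Then for every $\phi\in\mathbb T_h$ and every $t\in\mathbb R$ with $t/h\notin\mathbb Z$, \[ h\sum_{j=1}^N \cot(\pi(t-t_j))\,\phi(t_j)=(H\phi)(t)+\cot(\pi t/h)\,\phi(t), \] where $(H\phi)(t):=\mathrm{p.v.}\int_0^1\cot(\pi(t-\tau))\,\phi(\tau)\,\mathrm d\tau$ is the periodic Hilbert transform.
   Context: Trigonometric polynomials are complex-valued 1-periodic functions; p.v. denotes the Cauchy principal value integral. *)

theory Defs
  imports "HOL-Analysis.Analysis"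
begin

definition fourier_e :: "int \<Rightarrow> real \<Rightarrow> complex" where
  "fourier_e n t = exp (2 * of_real pi * \<i> * of_int n * of_real t)"

definition trig_index :: "nat \<Rightarrow> int set" where
  "trig_index N = {n. - (real N / 2) \<le> real_of_int n \<and> real_of_int n < real N / 2}"

definition trig_space :: "nat \<Rightarrow> (real \<Rightarrow> complex) set" where
  "trig_space N = {\<phi>. \<exists>c :: int \<Rightarrow> complex.
      \<phi> = (\<lambda>t. \<Sum>n\<in>trig_index N. c n * fourier_e n t)}"

definition hilbert_trunc :: "(real \<Rightarrow> complex) \<Rightarrow> real \<Rightarrow> real \<Rightarrow> complex" where
  "hilbert_trunc \<phi> t \<epsilon> =
     integral {\<tau> \<in> {0..1}. \<forall>k::int. \<epsilon> \<le> \<bar>t - \<tau> - real_of_int k\<bar>}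
       (\<lambda>\<tau>. complex_of_real (cot (pi * (t - \<tau>))) * \<phi> \<tau>)"

definition periodic_hilbert :: "(real \<Rightarrow> complex) \<Rightarrow> real \<Rightarrow> complex" where
  "periodic_hilbert \<phi> t = Lim (at_right 0) (hilbert_trunc \<phi> t)"

end

theory Submission
  imports Defs
begin

lemma fe_add: "fourier_e (a+b) s = fourier_e a s * fourier_e b s"
  unfolding fourier_e_def by (simp add: exp_add[symmetric] algebra_simps)

lemma fe_zero[simp]: "fourier_e 0 s = 1"
  unfolding fourier_e_def by simp

lemma fe_shift: "fourier_e n \<tau> = fourier_e n t * fourier_e (-n) (t - \<tau>)"
  unfolding fourier_e_def by (simp add: exp_add[symmetric] algebra_simps)

lemma cot_z:
  assumes "sin (pi * s) \<noteq> 0"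
  shows "complex_of_real (cot (pi * s)) * (fourier_e 1 s - 1) = \<i> * (fourier_e 1 s + 1)"
proof -
  have e: "fourier_e 1 s = Complex (cos (2*(pi * s))) (sin (2*(pi * s)))"
    unfolding fourier_e_def
    by (simp add: exp_eq_polar cis.ctr mult_ac del: Complex_eq)
  show ?thesis unfolding e cot_def cos_double sin_double
    using assms by (simp add: complex_eq_iff field_simps power2_eq_square)
       (metis distrib_left mult.right_neutral sin_cos_squared_add3)
qed

lemma fe_ne1: assumes "sin (pi * s) \<noteq> 0" shows "fourier_e 1 s \<noteq> 1"
  using cot_z[OF assms] by auto

definition qf :: "int \<Rightarrow> real \<Rightarrow> complex" where
  "qf n s = (if 0 \<le> n then - \<i> * (\<Sum>k<nat n. fourier_e (- int k) s + fourier_e (- (int k + 1)) s)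
     else \<i> * (\<Sum>k<nat (-n). fourier_e (int k) s + fourier_e (int k + 1) s))"

lemma tele1: "fourier_e (- int m) s - 1 = - (fourier_e 1 s - 1) * (\<Sum>k<m. fourier_e (- (int k + 1)) s)"
proof (induction m)
  case (Suc m)
  have "fourier_e (- int (Suc m)) s = fourier_e (- int m) s - (fourier_e 1 s - 1) * fourier_e (- (int m + 1)) s"
    using fe_add[of 1 "- (int m + 1)" s] by (simp add: algebra_simps)
  then show ?case using Suc by (simp add: algebra_simps)
qed simp

lemma tele2: "fourier_e (int m) s - 1 = (fourier_e 1 s - 1) * (\<Sum>k<m. fourier_e (int k) s)"
proof (induction m)
  case (Suc m)
  have *: "fourier_e (int (Suc m)) s = fourier_e 1 s * fourier_e (int m) s"
    using fe_add[of 1 "int m" s] by (simp add: algebra_simps)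
  show ?case using Suc * by (simp only: sum.lessThan_Suc) algebra
qed simp

lemma qf_eq:
  assumes "sin (pi * s) \<noteq> 0"
  shows "complex_of_real (cot (pi * s)) * fourier_e (-n) s = complex_of_real (cot (pi * s)) + qf n s"
proof (cases "0 \<le> n")
  case True
  define m where "m = nat n"
  have n: "n = int m" using True m_def by simp
  have z: "fourier_e (- int k) s = fourier_e 1 s * fourier_e (- (int k + 1)) s" for k
    using fe_add[of 1 "- (int k + 1)" s] by simp
  have "complex_of_real (cot (pi * s)) * (fourier_e (-n) s - 1)
     = - (complex_of_real (cot (pi * s)) * (fourier_e 1 s - 1)) * (\<Sum>k<m. fourier_e (- (int k + 1)) s)"
    unfolding n tele1 by (simp add: algebra_simps)
  also have "\<dots> = - \<i> * (\<Sum>k<m. (fourier_e 1 s + 1) * fourier_e (- (int k + 1)) s)"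
    unfolding cot_z[OF assms] by (simp add: sum_distrib_left algebra_simps)
  also have "\<dots> = qf n s" unfolding qf_def using True
    by (simp add: m_def[symmetric] z algebra_simps)
  finally show ?thesis by (simp add: algebra_simps)
next
  case False
  define m where "m = nat (-n)"
  have n: "-n = int m" using False m_def by simp
  have z: "fourier_e (1 + int k) s = fourier_e 1 s * fourier_e (int k) s" for k
    using fe_add[of 1 "int k" s] by (simp add: add.commute)
  have "complex_of_real (cot (pi * s)) * (fourier_e (-n) s - 1)
     = (complex_of_real (cot (pi * s)) * (fourier_e 1 s - 1)) * (\<Sum>k<m. fourier_e (int k) s)"
    unfolding n tele2 by (simp add: algebra_simps)
  also have "\<dots> = \<i> * (\<Sum>k<m. (fourier_e 1 s + 1) * fourier_e (int k) s)"
    unfolding cot_z[OF assms] by (simp add: sum_distrib_left algebra_simps)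
  also have "\<dots> = qf n s" unfolding qf_def using False
    by (simp add: m_def[symmetric] z algebra_simps)
  finally show ?thesis by (simp add: algebra_simps)
qed

lemma fe_int_period: "fourier_e k (x + of_int m) = fourier_e k x"
proof -
  have "fourier_e k (x + of_int m) = fourier_e k x * exp ((2 * of_int (k*m) * pi) * \<i>)"
    unfolding fourier_e_def by (simp add: exp_add[symmetric] algebra_simps)
  also have "exp ((2 * of_int (k*m) * pi) * \<i>) = 1"
    by (rule exp_integer_2pi) simp
  finally show ?thesis by simp
qed

lemma disc_orth:
  assumes N: "N > 0" and k: "\<bar>k\<bar> < int N"
  shows "(\<Sum>j=1..N. fourier_e k (t - real j * (1 / real N))) = (if k = 0 then of_nat N else 0)"
proof (cases "k = 0")
  case True then show ?thesis by simp
next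
  case False
  define r where "r = exp (\<i> * of_real (- 2 * pi * of_int k / of_nat N))"
  have fj: "fourier_e k (t - real j * (1 / real N)) = fourier_e k t * r ^ j" for j
  proof -
    have "fourier_e k (t - real j * (1 / real N)) = fourier_e k t * exp (of_nat j * (\<i> * of_real (- 2 * pi * of_int k / of_nat N)))"
      unfolding fourier_e_def by (simp add: exp_add[symmetric] algebra_simps diff_divide_distrib)
    then show ?thesis unfolding r_def exp_of_nat_mult .
  qed
  have rN: "r ^ N = 1"
  proof -
    have "r ^ N = exp (of_nat N * (\<i> * of_real (- 2 * pi * of_int k / of_nat N)))"
      unfolding r_def exp_of_nat_mult ..
    also have "\<dots> = exp ((2 * of_int (-k) * pi) * \<i>)" using N by (simp add: field_simps)
    also have "\<dots> = 1" by (rule exp_integer_2pi) simp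
    finally show ?thesis .
  qed
  have r1: "r \<noteq> 1"
  proof
    assume "r = 1"
    then obtain n :: int where n: "- 2 * pi * real_of_int k / real N = real_of_int (2*n) * pi"
      unfolding r_def exp_eq_1 by auto
    then have "pi * (- real_of_int k) = pi * (real_of_int n * real N)" using N by (simp add: field_simps)
    then have "- real_of_int k = real_of_int n * real N" by (metis mult_cancel_left pi_neq_zero)
    then have "- k = n * int N" by (metis of_int_eq_iff of_int_minus of_int_mult of_int_of_nat_eq)
    then have e: "\<bar>k\<bar> = \<bar>n\<bar> * int N" by (metis abs_minus_cancel abs_mult abs_of_nat)
    have "n \<noteq> 0" using \<open>- k = n * int N\<close> False by auto
    then have "\<bar>n\<bar> \<ge> 1" by simp
    then have "\<bar>n\<bar> * int N \<ge> int N" using mult_right_mono[of 1 "\<bar>n\<bar>" "int N"] by simp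
    then show False using e k by simp
  qed
  have "(\<Sum>j=1..N. r ^ j) = (\<Sum>j<N. r ^ Suc j)"
    by (rule sum.reindex_bij_witness[of _ Suc "\<lambda>j. j - 1"]) auto
  also have "\<dots> = r * (\<Sum>j<N. r ^ j)" by (simp add: sum_distrib_left)
  also have "\<dots> = 0" using r1 rN by (simp add: geometric_sum)
  finally have "(\<Sum>j=1..N. r ^ j) = 0" .
  moreover have "(\<Sum>j=1..N. fourier_e k (t - real j * (1 / real N))) = fourier_e k t * (\<Sum>j=1..N. r^j)"
    by (simp only: fj sum_distrib_left)
  ultimately show ?thesis using False by simp
qed

lemma cont_orth:
  "((\<lambda>\<tau>. fourier_e k (t - \<tau>)) has_integral (if k = 0 then 1 else 0)) {0..1}"
proof (cases "k = 0")
  case True then show ?thesis using has_integral_const_real[of "1::complex" 0 1] by simp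
next
  case False
  define c where "c = 2 * of_real pi * \<i> * (of_int k :: complex)"
  have c0: "c \<noteq> 0" using False by (simp add: c_def)
  define g where "g w = exp (c * (of_real t - w)) / (- c)" for w
  have fe: "fourier_e k (t - \<tau>) = exp (c * (of_real t - of_real \<tau>))" for \<tau>
    unfolding fourier_e_def c_def by (simp add: algebra_simps)
  have "(g has_field_derivative exp (c * (of_real t - w))) (at w)" for w
    unfolding g_def using c0
    by (auto intro!: derivative_eq_intros simp: field_simps)
  then have "((\<lambda>\<tau>. g (of_real \<tau>)) has_vector_derivative fourier_e k (t - \<tau>)) (at \<tau> within {0..1})" for \<tau>
    unfolding fe by (rule has_vector_derivative_real_field)
  from fundamental_theorem_of_calculus[OF _ this]
  have "((\<lambda>\<tau>. fourier_e k (t - \<tau>)) has_integral (g 1 - g 0)) {0..1}" by simp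
  moreover have "g 1 = g 0"
  proof -
    have "exp (c * (of_real t - 1)) = exp (c * of_real t) * exp ((2 * of_int (-k) * pi) * \<i>)"
      unfolding c_def by (simp add: exp_add[symmetric] algebra_simps)
    also have "exp ((2 * of_int (-k) * pi) * \<i>) = 1" by (rule exp_integer_2pi) simp
    finally show ?thesis unfolding g_def by simp
  qed
  ultimately show ?thesis using False by simp
qed

lemma trig_index_bounds:
  assumes "n \<in> trig_index N" shows "2*n < int N" "- int N \<le> 2*n"
proof -
  have a: "real_of_int (2*n) < real_of_int (int N)" "real_of_int (- int N) \<le> real_of_int (2*n)"
    using assms unfolding trig_index_def by auto
  show "2*n < int N" "- int N \<le> 2*n" using a by (simp_all only: of_int_less_iff of_int_le_iff)
qed

lemma finite_trig_index: "finite (trig_index N)"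
proof (rule finite_subset)
  show "trig_index N \<subseteq> {- int N..int N}"
    using trig_index_bounds[of _ N] by force
qed simp

definition G :: "nat \<Rightarrow> (nat \<Rightarrow> int) \<Rightarrow> (nat \<Rightarrow> int) \<Rightarrow> real \<Rightarrow> complex" where
  "G m f1 f2 s = (\<Sum>k<m. fourier_e (f1 k) s + fourier_e (f2 k) s)"
definition GV :: "nat \<Rightarrow> (nat \<Rightarrow> int) \<Rightarrow> (nat \<Rightarrow> int) \<Rightarrow> complex" where
  "GV m f1 f2 = (\<Sum>k<m. (if f1 k = 0 then 1 else 0) + (if f2 k = 0 then 1 else (0::complex)))"

lemma qf_G: "qf n s = (if 0 \<le> n then - \<i> * G (nat n) (\<lambda>k. - int k) (\<lambda>k. - (int k + 1)) s
   else \<i> * G (nat (-n)) (\<lambda>k. int k) (\<lambda>k. int k + 1) s)"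
  unfolding qf_def G_def by simp

lemma gen_avg:
  fixes m :: nat
  assumes N: "N > 0" and b: "\<And>k. k < m \<Longrightarrow> \<bar>f1 k\<bar> < int N \<and> \<bar>f2 k\<bar> < int N"
  shows "(\<Sum>j=1..N. G m f1 f2 (t - real j * (1 / real N))) = of_nat N * GV m f1 f2"
    and "((\<lambda>\<tau>. G m f1 f2 (t - \<tau>)) has_integral GV m f1 f2) {0..1}"
proof -
  show "(\<Sum>j=1..N. G m f1 f2 (t - real j * (1 / real N))) = of_nat N * GV m f1 f2"
  proof -
    have "(\<Sum>j=1..N. (\<Sum>k<m. fourier_e (f1 k) (t - real j * (1 / real N)) + fourier_e (f2 k) (t - real j * (1 / real N))))
      = (\<Sum>k<m. (\<Sum>j=1..N. fourier_e (f1 k) (t - real j * (1 / real N))) + (\<Sum>j=1..N. fourier_e (f2 k) (t - real j * (1 / real N))))"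
      by (subst sum.swap) (simp only: sum.distrib)
    also have "\<dots> = (\<Sum>k<m. of_nat N * ((if f1 k = 0 then 1 else 0) + (if f2 k = 0 then 1 else (0::complex))))"
    proof (rule sum.cong)
      fix x assume "x \<in> {..<m}"
      then have bx: "\<bar>f1 x\<bar> < int N" "\<bar>f2 x\<bar> < int N" using b by auto
      show "(\<Sum>j=1..N. fourier_e (f1 x) (t - real j * (1 / real N))) + (\<Sum>j=1..N. fourier_e (f2 x) (t - real j * (1 / real N)))
         = of_nat N * ((if f1 x = 0 then 1 else 0) + (if f2 x = 0 then 1 else (0::complex)))"
        by (simp only: disc_orth[OF N bx(1)] disc_orth[OF N bx(2)]) simp
    qed simp
    finally show ?thesis unfolding GV_def G_def by (simp only: sum_distrib_left)
  qed
  show "((\<lambda>\<tau>. G m f1 f2 (t - \<tau>)) has_integral GV m f1 f2) {0..1}"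
    unfolding GV_def G_def by (rule has_integral_sum) (simp, intro has_integral_add cont_orth)
qed

lemma qf_avg:
  assumes N: "N > 0" and n: "n \<in> trig_index N"
  obtains V where "(\<Sum>j=1..N. qf n (t - real j * (1 / real N))) = of_nat N * V"
    and "((\<lambda>\<tau>. qf n (t - \<tau>)) has_integral V) {0..1}"
proof (cases "0 \<le> n")
  case True
  have b: "\<bar>- int k\<bar> < int N \<and> \<bar>- (int k + 1)\<bar> < int N" if "k < nat n" for k
    using that trig_index_bounds[OF n] True by linarith
  note g = gen_avg[of N "nat n" "\<lambda>k. - int k" "\<lambda>k. - (int k + 1)" t, OF N b]
  show ?thesis
  proof (rule that[of "- \<i> * GV (nat n) (\<lambda>k. - int k) (\<lambda>k. - (int k + 1))"])
    show "(\<Sum>j=1..N. qf n (t - real j * (1 / real N))) = of_nat N * (- \<i> * GV (nat n) (\<lambda>k. - int k) (\<lambda>k. - (int k + 1)))"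
      unfolding qf_G using True g(1) by (simp add: sum_negf sum_distrib_left[symmetric])
    show "((\<lambda>\<tau>. qf n (t - \<tau>)) has_integral - \<i> * GV (nat n) (\<lambda>k. - int k) (\<lambda>k. - (int k + 1))) {0..1}"
      unfolding qf_G using True has_integral_mult_right[OF g(2), where c="- \<i>"] by simp
  qed
next
  case False
  have b: "\<bar>int k\<bar> < int N \<and> \<bar>int k + 1\<bar> < int N" if "k < nat (-n)" for k
    using that trig_index_bounds[OF n] False N by linarith
  note g = gen_avg[of N "nat (-n)" "\<lambda>k. int k" "\<lambda>k. int k + 1" t, OF N b]
  show ?thesis
  proof (rule that[of "\<i> * GV (nat (-n)) (\<lambda>k. int k) (\<lambda>k. int k + 1)"])
    show "(\<Sum>j=1..N. qf n (t - real j * (1 / real N))) = of_nat N * (\<i> * GV (nat (-n)) (\<lambda>k. int k) (\<lambda>k. int k + 1))"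
      unfolding qf_G using False g(1) by (simp add: sum_distrib_left[symmetric])
    show "((\<lambda>\<tau>. qf n (t - \<tau>)) has_integral \<i> * GV (nat (-n)) (\<lambda>k. int k) (\<lambda>k. int k + 1)) {0..1}"
      unfolding qf_G using False has_integral_mult_right[OF g(2), where c="\<i>"] by simp
  qed
qed

lemma fe_pow: "fourier_e 1 s ^ k = fourier_e (int k) s"
  unfolding fourier_e_def exp_of_nat_mult[symmetric] by (simp add: mult_ac)

lemma sin_nz: assumes "x \<notin> \<int>" shows "sin (pi * x) \<noteq> 0"
proof
  assume "sin (pi * x) = 0"
  then obtain i :: int where "pi * x = of_int i * pi" by (auto simp: sin_zero_iff_int2)
  then have "x = of_int i" by simp
  then show False using assms by simp
qed

lemma cot_sum:
  assumes N: "N > 0" and tN: "t * real N \<notin> \<int>"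
  shows "(\<Sum>j=1..N. complex_of_real (cot (pi * (t - real j * (1 / real N))))) = of_nat N * complex_of_real (cot (pi * (t * real N)))"
proof -
  define U where "U = fourier_e 1 (t * real N)"
  have sU: "sin (pi * (t * real N)) \<noteq> 0" using sin_nz[OF tN] .
  have U1: "U \<noteq> 1" unfolding U_def by (rule fe_ne1[OF sU])
  have sj: "sin (pi * (t - real j * (1 / real N))) \<noteq> 0" for j
  proof (rule sin_nz)
    show "t - real j * (1 / real N) \<notin> \<int>"
    proof
      assume "t - real j * (1 / real N) \<in> \<int>"
      then obtain i where "t - real j * (1 / real N) = of_int i" by (auto elim: Ints_cases)
      then have "t * real N = of_int (i * int N + int j)" using N by (simp add: field_simps)
      then show False using tN by (metis Ints_of_int)
    qed
  qed
  define z where "z j = fourier_e 1 (t - real j * (1 / real N))" for j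
  have zN: "z j ^ N = U" for j
  proof -
    have "z j ^ N = fourier_e (int N) (t - real j * (1 / real N))" unfolding z_def fe_pow ..
    also have "\<dots> = U * exp ((2 * of_int (- int j) * pi) * \<i>)"
      unfolding U_def fourier_e_def using N by (simp add: exp_add[symmetric] algebra_simps)
    also have "exp ((2 * of_int (- int j) * pi) * \<i>) = 1" by (rule exp_integer_2pi) simp
    finally show ?thesis by simp
  qed
  have z1: "z j \<noteq> 1" for j unfolding z_def by (rule fe_ne1[OF sj])
  have cj: "complex_of_real (cot (pi * (t - real j * (1 / real N)))) = \<i> + 2 * \<i> * (\<Sum>k<N. fourier_e (int k) (t - real j * (1 / real N))) / (U - 1)" for j
  proof -
    have "complex_of_real (cot (pi * (t - real j * (1 / real N)))) * (z j - 1) = \<i> * (z j + 1)"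
      unfolding z_def by (rule cot_z[OF sj])
    then have c: "complex_of_real (cot (pi * (t - real j * (1 / real N)))) = \<i> + 2 * \<i> / (z j - 1)"
      using z1[of j] by (simp add: field_simps)
    have "(\<Sum>k<N. fourier_e (int k) (t - real j * (1 / real N))) = (\<Sum>k<N. z j ^ k)"
      unfolding z_def fe_pow ..
    also have "\<dots> = (U - 1) / (z j - 1)" using z1[of j] zN[of j] by (simp add: geometric_sum)
    finally show ?thesis unfolding c using U1 by simp
  qed
  have ds: "(\<Sum>j=1..N. (\<Sum>k<N. fourier_e (int k) (t - real j * (1 / real N)))) = of_nat N"
  proof -
    have "(\<Sum>j=1..N. (\<Sum>k<N. fourier_e (int k) (t - real j * (1 / real N))))
        = (\<Sum>k<N. (\<Sum>j=1..N. fourier_e (int k) (t - real j * (1 / real N))))"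
      by (rule sum.swap)
    also have "\<dots> = (\<Sum>k<N. (if int k = 0 then of_nat N else 0))"
      by (rule sum.cong) (simp_all only: disc_orth[OF N] lessThan_iff of_nat_less_iff abs_of_nat)
    also have "\<dots> = of_nat N" using N by (simp add: sum.delta' lessThan_def)
    finally show ?thesis .
  qed
  have "(\<Sum>j=1..N. complex_of_real (cot (pi * (t - real j * (1 / real N))))) = of_nat N * \<i> + 2 * \<i> * of_nat N / (U - 1)"
    unfolding cj sum.distrib sum_divide_distrib[symmetric] sum_distrib_left[symmetric] ds by simp
  also have "\<dots> = of_nat N * (\<i> * (U + 1) / (U - 1))" using U1 by (simp add: field_simps)
  also have "\<i> * (U + 1) / (U - 1) = complex_of_real (cot (pi * (t * real N)))"
    using cot_z[OF sU] U1 unfolding U_def by (simp add: field_simps)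
  finally show ?thesis .
qed

lemma not_int_between: fixes x :: real assumes "of_int m < x" "x < of_int m + 1" shows "x \<notin> \<int>"
proof
  assume "x \<in> \<int>"
  then obtain i where i: "x = of_int i" by (auto elim: Ints_cases)
  then have "m < i" "i < m + 1" using assms by simp_all
  then show False by simp
qed

lemma hilb_set:
  assumes t: "t = of_int fl + t0" and e: "0 < \<epsilon>" "\<epsilon> < t0" "\<epsilon> < 1 - t0"
  shows "{\<tau> \<in> {0..1}. \<forall>k::int. \<epsilon> \<le> \<bar>t - \<tau> - real_of_int k\<bar>} = {0..t0-\<epsilon>} \<union> {t0+\<epsilon>..1}"
proof (intro set_eqI iffI)
  fix \<tau> assume "\<tau> \<in> {\<tau> \<in> {0..1}. \<forall>k::int. \<epsilon> \<le> \<bar>t - \<tau> - real_of_int k\<bar>}"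
  then have "\<tau> \<in> {0..1}" "\<epsilon> \<le> \<bar>t - \<tau> - real_of_int fl\<bar>" by auto
  then show "\<tau> \<in> {0..t0-\<epsilon>} \<union> {t0+\<epsilon>..1}" using t by auto
next
  fix \<tau> assume a: "\<tau> \<in> {0..t0-\<epsilon>} \<union> {t0+\<epsilon>..1}"
  have "\<epsilon> \<le> \<bar>t - \<tau> - real_of_int k\<bar>" for k
  proof -
    consider "k = fl" | "k \<ge> fl + 1" | "k \<le> fl - 1" by linarith
    then show ?thesis
    proof cases
      case 1 then show ?thesis using a t by auto
    next
      case 2 then have "real_of_int k \<ge> real_of_int fl + 1" by (metis of_int_add of_int_le_iff of_int_1)
      then show ?thesis using a t e by auto
    next
      case 3 then have "real_of_int k \<le> real_of_int fl - 1" by (metis of_int_diff of_int_le_iff of_int_1)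
      then show ?thesis using a t e by auto
    qed
  qed
  then show "\<tau> \<in> {\<tau> \<in> {0..1}. \<forall>k::int. \<epsilon> \<le> \<bar>t - \<tau> - real_of_int k\<bar>}" using a e by auto
qed

definition Flog :: "real \<Rightarrow> real \<Rightarrow> real" where
  "Flog t \<tau> = - ln ((sin (pi * (t - \<tau>)))\<^sup>2) / (2 * pi)"

lemma Flog_deriv:
  assumes "sin (pi * (t - \<tau>)) \<noteq> 0"
  shows "(Flog t has_real_derivative cot (pi * (t - \<tau>))) (at \<tau>)"
  unfolding Flog_def[abs_def] using assms
  by (auto intro!: derivative_eq_intros simp: cot_def divide_simps power2_eq_square not_square_less_zero less_le)

lemma cot_int:
  assumes "a \<le> b" "\<And>\<tau>. \<tau> \<in> {a..b} \<Longrightarrow> sin (pi * (t - \<tau>)) \<noteq> 0"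
  shows "((\<lambda>\<tau>. complex_of_real (cot (pi * (t - \<tau>)))) has_integral (of_real (Flog t b - Flog t a))) {a..b}"
proof -
  have "((\<lambda>\<tau>. complex_of_real (Flog t \<tau>)) has_vector_derivative complex_of_real (cot (pi * (t - \<tau>)))) (at \<tau> within {a..b})"
    if "\<tau> \<in> {a..b}" for \<tau>
    by (rule has_vector_derivative_at_within, rule has_vector_derivative_of_real, rule Flog_deriv, rule assms(2)[OF that])
  from fundamental_theorem_of_calculus[OF assms(1) this] show ?thesis by simp
qed

lemma sin_sq_int_shift: "(sin (pi * (of_int m + x)))\<^sup>2 = (sin (pi * (of_int m - x)))\<^sup>2"
proof -
  have z: "sin (pi * of_int m) = 0" by (simp add: sin_times_pi_eq_0 mult.commute)
  show ?thesis by (simp add: distrib_left right_diff_distrib sin_add sin_diff z power2_eq_square)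
qed

lemma cot_int_total:
  assumes t: "t = of_int fl + t0" and e: "0 < \<epsilon>" "\<epsilon> < t0" "\<epsilon> < 1 - t0"
  shows "((\<lambda>\<tau>. complex_of_real (cot (pi * (t - \<tau>)))) has_integral of_real (Flog t (t0-\<epsilon>) - Flog t 0)) {0..t0-\<epsilon>}"
    and "((\<lambda>\<tau>. complex_of_real (cot (pi * (t - \<tau>)))) has_integral of_real (Flog t 1 - Flog t (t0+\<epsilon>))) {t0+\<epsilon>..1}"
    and "Flog t (t0-\<epsilon>) - Flog t 0 + (Flog t 1 - Flog t (t0+\<epsilon>)) = 0"
proof -
  show "((\<lambda>\<tau>. complex_of_real (cot (pi * (t - \<tau>)))) has_integral of_real (Flog t (t0-\<epsilon>) - Flog t 0)) {0..t0-\<epsilon>}"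
  proof (rule cot_int)
    fix \<tau> assume "\<tau> \<in> {0..t0-\<epsilon>}"
    then show "sin (pi * (t - \<tau>)) \<noteq> 0" using t e by (intro sin_nz not_int_between[of fl]) auto
  qed (use e in auto)
  show "((\<lambda>\<tau>. complex_of_real (cot (pi * (t - \<tau>)))) has_integral of_real (Flog t 1 - Flog t (t0+\<epsilon>))) {t0+\<epsilon>..1}"
  proof (rule cot_int)
    fix \<tau> assume "\<tau> \<in> {t0+\<epsilon>..1}"
    then show "sin (pi * (t - \<tau>)) \<noteq> 0" using t e by (intro sin_nz not_int_between[of "fl - 1"]) auto
  qed (use e in auto)
  have "Flog t 1 = Flog t 0" unfolding Flog_def by (simp add: right_diff_distrib sin_diff)
  moreover have "Flog t (t0-\<epsilon>) = Flog t (t0+\<epsilon>)"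
    unfolding Flog_def t using sin_sq_int_shift[of fl \<epsilon>] by (simp add: algebra_simps)
  ultimately show "Flog t (t0-\<epsilon>) - Flog t 0 + (Flog t 1 - Flog t (t0+\<epsilon>)) = 0" by simp
qed

lemma sin_nz_on:
  assumes t: "t = of_int fl + t0" and e: "0 < \<epsilon>" "\<epsilon> < t0" "\<epsilon> < 1 - t0"
    and "\<tau> \<in> {0..t0-\<epsilon>} \<union> {t0+\<epsilon>..1}"
  shows "sin (pi * (t - \<tau>)) \<noteq> 0"
  using assms(5)
proof
  assume "\<tau> \<in> {0..t0-\<epsilon>}"
  then show "sin (pi * (t - \<tau>)) \<noteq> 0" using t e by (intro sin_nz not_int_between[of fl]) auto
next
  assume "\<tau> \<in> {t0+\<epsilon>..1}"
  then show "sin (pi * (t - \<tau>)) \<noteq> 0" using t e by (intro sin_nz not_int_between[of "fl - 1"]) auto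
qed

lemma qf_cont: "continuous_on S (\<lambda>\<tau>. qf n (t - \<tau>))"
  unfolding qf_G G_def fourier_e_def by (cases "0 \<le> n") (auto intro!: continuous_intros)

lemma pointwise:
  assumes "sin (pi * (t - \<tau>)) \<noteq> 0"
  shows "complex_of_real (cot (pi * (t - \<tau>))) * fourier_e n \<tau> = fourier_e n t * (complex_of_real (cot (pi * (t - \<tau>))) + qf n (t - \<tau>))"
  using qf_eq[OF assms, of n] fe_shift[of n \<tau> t] by (simp add: algebra_simps)

lemma hilb_en:
  assumes t: "t = of_int fl + t0" and e: "0 < \<epsilon>" "\<epsilon> < t0" "\<epsilon> < 1 - t0"
    and hq: "((\<lambda>\<tau>. qf n (t - \<tau>)) has_integral Qv) {0..1}"
  shows "((\<lambda>\<tau>. complex_of_real (cot (pi * (t - \<tau>))) * fourier_e n \<tau>) has_integral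
      fourier_e n t * (Qv - integral {t0-\<epsilon>..t0+\<epsilon>} (\<lambda>\<tau>. qf n (t - \<tau>)))) ({0..t0-\<epsilon>} \<union> {t0+\<epsilon>..1})"
proof -
  define q where "q = (\<lambda>\<tau>. qf n (t - \<tau>))"
  have qi: "q integrable_on {x..y}" for x y
    unfolding q_def by (rule integrable_continuous_interval, rule qf_cont)
  have sum3: "integral {0..t0-\<epsilon>} q + integral {t0-\<epsilon>..t0+\<epsilon>} q + integral {t0+\<epsilon>..1} q = Qv"
  proof -
    have "integral {t0-\<epsilon>..t0+\<epsilon>} q + integral {t0+\<epsilon>..1} q = integral {t0-\<epsilon>..1} q"
      by (rule Henstock_Kurzweil_Integration.integral_combine) (use e qi in auto)
    moreover have "integral {0..t0-\<epsilon>} q + integral {t0-\<epsilon>..1} q = integral {0..1} q"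
      by (rule Henstock_Kurzweil_Integration.integral_combine) (use e qi in auto)
    moreover have "integral {0..1} q = Qv" using hq unfolding q_def by (rule integral_unique)
    ultimately show ?thesis by (simp add: add.assoc)
  qed
  note ct = cot_int_total[OF t e]
  have h1: "((\<lambda>\<tau>. complex_of_real (cot (pi * (t - \<tau>))) * fourier_e n \<tau>) has_integral
      fourier_e n t * (of_real (Flog t (t0-\<epsilon>) - Flog t 0) + integral {0..t0-\<epsilon>} q)) {0..t0-\<epsilon>}"
  proof (rule has_integral_eq[OF _ has_integral_mult_right[OF has_integral_add[OF ct(1) integrable_integral[OF qi]]]])
    fix \<tau> assume "\<tau> \<in> {0..t0-\<epsilon>}"
    then have "sin (pi * (t - \<tau>)) \<noteq> 0" by (intro sin_nz_on[OF t e]) auto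
    then show "fourier_e n t * (complex_of_real (cot (pi * (t - \<tau>))) + q \<tau>) = complex_of_real (cot (pi * (t - \<tau>))) * fourier_e n \<tau>"
      unfolding q_def by (simp add: pointwise)
  qed
  have h2: "((\<lambda>\<tau>. complex_of_real (cot (pi * (t - \<tau>))) * fourier_e n \<tau>) has_integral
      fourier_e n t * (of_real (Flog t 1 - Flog t (t0+\<epsilon>)) + integral {t0+\<epsilon>..1} q)) {t0+\<epsilon>..1}"
  proof (rule has_integral_eq[OF _ has_integral_mult_right[OF has_integral_add[OF ct(2) integrable_integral[OF qi]]]])
    fix \<tau> assume "\<tau> \<in> {t0+\<epsilon>..1}"
    then have "sin (pi * (t - \<tau>)) \<noteq> 0" by (intro sin_nz_on[OF t e]) auto
    then show "fourier_e n t * (complex_of_real (cot (pi * (t - \<tau>))) + q \<tau>) = complex_of_real (cot (pi * (t - \<tau>))) * fourier_e n \<tau>"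
      unfolding q_def by (simp add: pointwise)
  qed
  have "{0..t0-\<epsilon>} \<inter> {t0+\<epsilon>..1} = {}" using e by auto
  from has_integral_Un[OF h1 h2] this
  have hU: "((\<lambda>\<tau>. complex_of_real (cot (pi * (t - \<tau>))) * fourier_e n \<tau>) has_integral
      fourier_e n t * (of_real (Flog t (t0-\<epsilon>) - Flog t 0) + integral {0..t0-\<epsilon>} q)
      + fourier_e n t * (of_real (Flog t 1 - Flog t (t0+\<epsilon>)) + integral {t0+\<epsilon>..1} q)) ({0..t0-\<epsilon>} \<union> {t0+\<epsilon>..1})"
    by simp
  have "fourier_e n t * (of_real (Flog t (t0-\<epsilon>) - Flog t 0) + integral {0..t0-\<epsilon>} q)
      + fourier_e n t * (of_real (Flog t 1 - Flog t (t0+\<epsilon>)) + integral {t0+\<epsilon>..1} q)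
      = fourier_e n t * (complex_of_real (Flog t (t0-\<epsilon>) - Flog t 0 + (Flog t 1 - Flog t (t0+\<epsilon>)))
         + (integral {0..t0-\<epsilon>} q + integral {t0+\<epsilon>..1} q))"
    by (simp add: algebra_simps)
  also have "\<dots> = fourier_e n t * (Qv - integral {t0-\<epsilon>..t0+\<epsilon>} q)"
    unfolding ct(3) sum3[symmetric] by (simp add: algebra_simps)
  finally show ?thesis using hU unfolding q_def by simp
qed

lemma R_lim:
  fixes q :: "real \<Rightarrow> complex"
  assumes qc: "continuous_on UNIV q"
  shows "((\<lambda>\<epsilon>. integral {t0-\<epsilon>..t0+\<epsilon>} q) \<longlongrightarrow> 0) (at_right 0)"
proof -
  have "compact (q ` {t0-1..t0+1})"
    by (rule compact_continuous_image) (use qc continuous_on_subset in auto)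
  then obtain B where B: "B > 0" "\<And>x. x \<in> q ` {t0-1..t0+1} \<Longrightarrow> norm x \<le> B"
    using compact_imp_bounded bounded_pos by metis
  have ev: "eventually (\<lambda>\<epsilon>. norm (integral {t0-\<epsilon>..t0+\<epsilon>} q) \<le> B * (2 * \<epsilon>)) (at_right 0)"
    unfolding eventually_at_right_field
  proof (intro exI[of _ 1] conjI allI impI)
    fix \<epsilon> :: real assume e: "0 < \<epsilon>" "\<epsilon> < 1"
    have "q integrable_on {t0-\<epsilon>..t0+\<epsilon>}"
      by (rule integrable_continuous_interval) (use qc continuous_on_subset in auto)
    then have "(q has_integral integral {t0-\<epsilon>..t0+\<epsilon>} q) {t0-\<epsilon>..t0+\<epsilon>}" by blast
    from has_integral_bound_real[OF _ _ this, of B "{}"]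
    show "norm (integral {t0-\<epsilon>..t0+\<epsilon>} q) \<le> B * (2 * \<epsilon>)"
      using B e by (auto simp: content_real)
  qed simp
  have "((\<lambda>\<epsilon>::real. B * (2 * \<epsilon>)) \<longlongrightarrow> B * (2 * 0)) (at_right 0)"
    by (intro tendsto_intros)
  then show ?thesis using Lim_null_comparison[OF ev] by simp
qed

lemma sj_nz:
  assumes N: "N > 0" and tN: "t * real N \<notin> \<int>"
  shows "sin (pi * (t - real j * (1 / real N))) \<noteq> 0"
proof (rule sin_nz)
  show "t - real j * (1 / real N) \<notin> \<int>"
  proof
    assume "t - real j * (1 / real N) \<in> \<int>"
    then obtain i where "t - real j * (1 / real N) = of_int i" by (auto elim: Ints_cases)
    then have "t * real N = of_int (i * int N + int j)" using N by (simp add: field_simps)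
    then show False using tN by (metis Ints_of_int)
  qed
qed

theorem proposition5p1:
  fixes N :: nat and \<phi> :: "real \<Rightarrow> complex" and t :: real
  assumes "N > 0"
    and "\<phi> \<in> trig_space N"
    and "t / (1 / real N) \<notin> \<int>"
  shows "(hilbert_trunc \<phi> t \<longlongrightarrow> periodic_hilbert \<phi> t) (at_right 0)
    \<and> complex_of_real (1 / real N) *
        (\<Sum>j=1..N. complex_of_real (cot (pi * (t - real j * (1 / real N)))) * \<phi> (real j * (1 / real N)))
      = periodic_hilbert \<phi> t + complex_of_real (cot (pi * t / (1 / real N))) * \<phi> t"
proof -
  note N = assms(1)
  define I where "I = trig_index N"
  have fI: "finite I" unfolding I_def by (rule finite_trig_index)
  obtain c where phi: "\<phi> = (\<lambda>t. \<Sum>n\<in>I. c n * fourier_e n t)"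
    using assms(2) unfolding trig_space_def I_def by blast
  have tN: "t * real N \<notin> \<int>" using assms(3) by simp
  have tZ: "t \<notin> \<int>"
  proof
    assume "t \<in> \<int>"
    then have "t * real N \<in> \<int>" by (intro Ints_mult) (auto simp: Ints_of_nat)
    then show False using tN by simp
  qed
  define fl where "fl = \<lfloor>t\<rfloor>"
  define t0 where "t0 = t - of_int fl"
  have t: "t = of_int fl + t0" unfolding t0_def by simp
  have t0: "0 < t0" "t0 < 1"
  proof -
    have "t0 \<ge> 0" "t0 < 1" unfolding t0_def fl_def by (simp_all add: of_int_floor_le) linarith
    moreover have "t0 \<noteq> 0" using tZ unfolding t0_def by auto
    ultimately show "0 < t0" "t0 < 1" by auto
  qed
  define Qv where "Qv n = complex_of_real (1 / real N) * (\<Sum>j=1..N. qf n (t - real j * (1 / real N)))" for n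
  have hq: "((\<lambda>\<tau>. qf n (t - \<tau>)) has_integral Qv n) {0..1}" if nI: "n \<in> I" for n
  proof -
    obtain V where V: "(\<Sum>j=1..N. qf n (t - real j * (1 / real N))) = of_nat N * V"
      "((\<lambda>\<tau>. qf n (t - \<tau>)) has_integral V) {0..1}"
      using qf_avg[OF N nI[unfolded I_def], of t] by blast
    have "Qv n = V" unfolding Qv_def V(1) using N by simp
    then show ?thesis using V(2) by simp
  qed
  define R where "R n \<epsilon> = integral {t0-\<epsilon>..t0+\<epsilon>} (\<lambda>\<tau>. qf n (t - \<tau>))" for n \<epsilon>
  define L where "L = (\<Sum>n\<in>I. c n * (fourier_e n t * Qv n))"
  have ev: "eventually (\<lambda>\<epsilon>. hilbert_trunc \<phi> t \<epsilon> = (\<Sum>n\<in>I. c n * (fourier_e n t * (Qv n - R n \<epsilon>)))) (at_right 0)"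
    unfolding eventually_at_right_field
  proof (intro exI[of _ "min t0 (1 - t0)"] conjI allI impI)
    fix \<epsilon> :: real assume e: "0 < \<epsilon>" "\<epsilon> < min t0 (1 - t0)"
    then have e': "0 < \<epsilon>" "\<epsilon> < t0" "\<epsilon> < 1 - t0" by auto
    have "((\<lambda>\<tau>. \<Sum>n\<in>I. c n * (complex_of_real (cot (pi * (t - \<tau>))) * fourier_e n \<tau>)) has_integral
        (\<Sum>n\<in>I. c n * (fourier_e n t * (Qv n - R n \<epsilon>)))) ({0..t0-\<epsilon>} \<union> {t0+\<epsilon>..1})"
      unfolding R_def by (intro has_integral_sum fI has_integral_mult_right hilb_en[OF t e'] hq)
    moreover have "(\<lambda>\<tau>. \<Sum>n\<in>I. c n * (complex_of_real (cot (pi * (t - \<tau>))) * fourier_e n \<tau>))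
        = (\<lambda>\<tau>. complex_of_real (cot (pi * (t - \<tau>))) * \<phi> \<tau>)"
      unfolding phi by (simp add: sum_distrib_left mult_ac)
    ultimately show "hilbert_trunc \<phi> t \<epsilon> = (\<Sum>n\<in>I. c n * (fourier_e n t * (Qv n - R n \<epsilon>)))"
      unfolding hilbert_trunc_def hilb_set[OF t e'] by (simp add: integral_unique)
  qed (use t0 in simp)
  have "((\<lambda>\<epsilon>. \<Sum>n\<in>I. c n * (fourier_e n t * (Qv n - R n \<epsilon>))) \<longlongrightarrow> (\<Sum>n\<in>I. c n * (fourier_e n t * (Qv n - 0)))) (at_right 0)"
    unfolding R_def by (intro tendsto_intros R_lim qf_cont)
  then have lim: "(hilbert_trunc \<phi> t \<longlongrightarrow> L) (at_right 0)"
    unfolding L_def using tendsto_cong[OF ev] by simp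
  then have PH: "periodic_hilbert \<phi> t = L"
    unfolding periodic_hilbert_def by (intro tendsto_Lim) simp_all
  have cot_eq: "cot (pi * t / (1 / real N)) = cot (pi * (t * real N))" by (simp add: mult_ac)
  have "(\<Sum>j=1..N. complex_of_real (cot (pi * (t - real j * (1 / real N)))) * \<phi> (real j * (1 / real N)))
      = (\<Sum>j=1..N. \<Sum>n\<in>I. c n * (fourier_e n t * (complex_of_real (cot (pi * (t - real j * (1 / real N)))) + qf n (t - real j * (1 / real N)))))"
  proof (rule sum.cong)
    fix j assume "j \<in> {1..N}"
    show "complex_of_real (cot (pi * (t - real j * (1 / real N)))) * \<phi> (real j * (1 / real N))
      = (\<Sum>n\<in>I. c n * (fourier_e n t * (complex_of_real (cot (pi * (t - real j * (1 / real N)))) + qf n (t - real j * (1 / real N)))))"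
      unfolding phi sum_distrib_left
    proof (rule sum.cong)
      fix n assume "n \<in> I"
      have p: "complex_of_real (cot (pi * (t - real j * (1 / real N)))) * fourier_e n (real j * (1 / real N))
        = fourier_e n t * (complex_of_real (cot (pi * (t - real j * (1 / real N)))) + qf n (t - real j * (1 / real N)))"
        by (rule pointwise[OF sj_nz[OF N tN]])
      have "complex_of_real (cot (pi * (t - real j * (1 / real N)))) * (c n * fourier_e n (real j * (1 / real N)))
        = c n * (complex_of_real (cot (pi * (t - real j * (1 / real N)))) * fourier_e n (real j * (1 / real N)))"
        by (rule mult.left_commute)
      also have "\<dots> = c n * (fourier_e n t * (complex_of_real (cot (pi * (t - real j * (1 / real N)))) + qf n (t - real j * (1 / real N))))"
        unfolding p ..
      finally show "complex_of_real (cot (pi * (t - real j * (1 / real N)))) * (c n * fourier_e n (real j * (1 / real N)))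
        = c n * (fourier_e n t * (complex_of_real (cot (pi * (t - real j * (1 / real N)))) + qf n (t - real j * (1 / real N))))" .
    qed simp
  qed simp
  also have "\<dots> = (\<Sum>n\<in>I. c n * (fourier_e n t * ((\<Sum>j=1..N. complex_of_real (cot (pi * (t - real j * (1 / real N))))) + (\<Sum>j=1..N. qf n (t - real j * (1 / real N))))))"
    by (subst sum.swap) (simp only: sum.distrib[symmetric] sum_distrib_left)
  also have "\<dots> = (\<Sum>n\<in>I. c n * (fourier_e n t * (of_nat N * complex_of_real (cot (pi * (t * real N))) + of_nat N * Qv n)))"
    unfolding cot_sum[OF N tN] Qv_def using N by simp
  finally have S: "(\<Sum>j=1..N. complex_of_real (cot (pi * (t - real j * (1 / real N)))) * \<phi> (real j * (1 / real N)))
      = (\<Sum>n\<in>I. c n * (fourier_e n t * (of_nat N * complex_of_real (cot (pi * (t * real N))) + of_nat N * Qv n)))" .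
  have D: "complex_of_real (1 / real N) *
        (\<Sum>j=1..N. complex_of_real (cot (pi * (t - real j * (1 / real N)))) * \<phi> (real j * (1 / real N)))
      = (\<Sum>n\<in>I. c n * (fourier_e n t * (complex_of_real (cot (pi * (t * real N))) + Qv n)))"
    unfolding S sum_distrib_left by (rule sum.cong) (use N in \<open>auto simp: field_simps\<close>)
  have "complex_of_real (1 / real N) *
        (\<Sum>j=1..N. complex_of_real (cot (pi * (t - real j * (1 / real N)))) * \<phi> (real j * (1 / real N)))
      = periodic_hilbert \<phi> t + complex_of_real (cot (pi * t / (1 / real N))) * \<phi> t"
    unfolding D unfolding PH unfolding L_def cot_eq unfolding phi by (simp add: sum_distrib_left sum.distrib[symmetric] algebra_simps)
  with lim PH show ?thesis by simp
qed

end
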